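(* Let $n\ge2$ be an integer and let $A_1,\dots,A_{2n}$ be (not necessarily distinct) points in $\mathbb{R}^m$; set $A_{2n+1}=A_1$. Let $G_1$ be the centroid of the odd-indexed points $A_1,A_3,\dots,A_{2n-1}$ and $G_2$ the centroid of the even-indexed points $A_2,A_4,\dots,A_{2n}$. Then $$\sum_{i=1}^{2n}|A_iA_{i+1}|^2=\sum_{\substack{1\le i<j\le 2n\\ 1<j-i<2n-1}}(-1)^{j-i}|A_iA_j|^2+n^2|G_1G_2|^2.$$ In particular, for $n=2$ this is the identity $|A_1A_2|^2+|A_2A_3|^2+|A_3A_4|^2+|A_4A_1|^2=|A_1A_3|^2+|A_2A_4|^2+4|LM|^2$, where $L,M$ are the midpoints of $A_1A_3$ and $A_2A_4$.
   Context: $|XY|$ denotes the Euclidean distance in $\mathbb{R}^m$; the centroid of points $B_1,\dots,B_r$ is the point with position vector $\frac1r\sum_k B_k$. *)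

theory Defs
  imports "HOL-Analysis.Analysis"
begin

end

theory Submission imports Defs begin

lemma sq_sym:
  fixes g :: "nat \<Rightarrow> nat \<Rightarrow> real"
  assumes "finite I" and sym: "\<And>i j. g i j = g j i" and diag: "\<And>i. g i i = 0"
  shows "(\<Sum>i\<in>I. \<Sum>j\<in>I. g i j) = 2 * (\<Sum>i\<in>I. \<Sum>j\<in>{j\<in>I. i<j}. g i j)"
proof -
  have split: "(\<Sum>j\<in>I. g i j) = (\<Sum>j\<in>{j\<in>I. i<j}. g i j) + (\<Sum>j\<in>{j\<in>I. j<i}. g i j)" for i
  proof -
    have "(\<Sum>j\<in>I. g i j) = (\<Sum>j\<in>{j\<in>I. i<j} \<union> {j\<in>I. j<i} \<union> {j\<in>I. j = i}. g i j)"
      by (rule sum.cong) auto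
    also have "\<dots> = (\<Sum>j\<in>{j\<in>I. i<j}. g i j) + (\<Sum>j\<in>{j\<in>I. j<i}. g i j) + (\<Sum>j\<in>{j\<in>I. j = i}. g i j)"
      using assms(1) by (subst sum.union_disjoint, auto)+
    also have "(\<Sum>j\<in>{j\<in>I. j = i}. g i j) = 0" by (rule sum.neutral) (auto simp: diag)
    finally show ?thesis by simp
  qed
  have "(\<Sum>i\<in>I. \<Sum>j\<in>{j\<in>I. j<i}. g i j) = (\<Sum>j\<in>I. \<Sum>i\<in>{i\<in>I. j<i}. g i j)"
    by (rule sum.swap_restrict[OF assms(1) assms(1)])
  also have "\<dots> = (\<Sum>i\<in>I. \<Sum>j\<in>{j\<in>I. i<j}. g i j)" by (simp add: sym)
  finally show ?thesis by (simp add: split sum.distrib)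
qed

lemma full_sq:
  fixes x :: "nat \<Rightarrow> 'a::real_inner"
  assumes "finite I" and E: "(\<Sum>j\<in>I. (-1::real)^j) = 0"
  shows "(\<Sum>i\<in>I. \<Sum>j\<in>I. (-1::real)^(i+j) * (norm (x i - x j))\<^sup>2)
     = -2 * (norm (\<Sum>i\<in>I. (-1::real)^i *\<^sub>R x i))\<^sup>2"
proof -
  have e: "(norm (a - b))\<^sup>2 = (norm a)\<^sup>2 + (norm b)\<^sup>2 - 2 * inner a b" for a b :: 'a
    by (simp add: power2_norm_eq_inner inner_diff inner_commute)
  have 1: "(\<Sum>i\<in>I. \<Sum>j\<in>I. (-1::real)^(i+j) * (norm (x i))\<^sup>2) = 0"
    by (simp add: power_add mult.assoc flip: sum_distrib_left sum_distrib_right add: E)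
  have 2: "(\<Sum>i\<in>I. \<Sum>j\<in>I. (-1::real)^(i+j) * (norm (x j))\<^sup>2) = 0"
    by (simp add: power_add mult.assoc mult.left_commute flip: sum_distrib_left sum_distrib_right add: E)
  have 3: "(norm (\<Sum>i\<in>I. (-1::real)^i *\<^sub>R x i))\<^sup>2 = (\<Sum>i\<in>I. \<Sum>j\<in>I. (-1::real)^(i+j) * inner (x i) (x j))"
    by (simp add: power2_norm_eq_inner inner_sum_left inner_sum_right power_add mult.assoc sum_distrib_left inner_commute mult.left_commute)
  show ?thesis
    by (simp add: e algebra_simps sum.distrib sum_subtractf 1 2 3 sum_distrib_left sum_negf)
qed


lemma sum_pairs:
  fixes f :: "nat \<Rightarrow> 'b::comm_monoid_add"
  shows "(\<Sum>i=1..2*n. f i) = (\<Sum>k=1..n. f (2*k - 1) + f (2*k))"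
proof (induction n)
  case 0 then show ?case by simp
next
  case (Suc n)
  have "{1..2*Suc n} = {1..2*n} \<union> {2*n+1, 2*n+2}" by auto
  then have "(\<Sum>i=1..2*Suc n. f i) = (\<Sum>i=1..2*n. f i) + (f (2*n+1) + f (2*n+2))"
    by (simp add: sum.union_disjoint add_ac)
  then show ?case using Suc by (simp add: add.commute)
qed

theorem corollary3p1:
  fixes A :: "nat \<Rightarrow> 'a::euclidean_space" and n :: nat
  assumes "n \<ge> 2"
    and "A (2*n + 1) = A 1"
  defines "G1 \<equiv> (1 / real n) *\<^sub>R (\<Sum>k=1..n. A (2*k - 1))"
    and "G2 \<equiv> (1 / real n) *\<^sub>R (\<Sum>k=1..n. A (2*k))"
  shows "(\<Sum>i=1..2*n. (dist (A i) (A (i+1)))\<^sup>2) =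
         (\<Sum>i=1..2*n. \<Sum>j\<in>{j. i < j \<and> j \<le> 2*n \<and> 1 < j - i \<and> j - i < 2*n - 1}.
             (-1::real) ^ (j - i) * (dist (A i) (A j))\<^sup>2)
         + (real n)\<^sup>2 * (dist G1 G2)\<^sup>2"
proof -
  define I where "I = {1..2*n}"
  define V where "V = (\<Sum>i\<in>I. (-1::real)^i *\<^sub>R A i)"
  define g where "g = (\<lambda>i j. (-1::real)^(i+j) * (norm (A i - A j))\<^sup>2)"
  define T where "T = (\<lambda>i. {j. i < j \<and> j \<le> 2*n \<and> 1 < j - i \<and> j - i < 2*n - 1})"
  have fI: "finite I" by (simp add: I_def)
  have E: "(\<Sum>j\<in>I. (-1::real)^j) = 0"
    unfolding I_def by (subst sum_pairs) simp
  have npos: "real n > 0" using assms(1) by simp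
  have nG: "real n *\<^sub>R (G1 - G2) = - V"
  proof -
    have "real n *\<^sub>R (G1 - G2) = (\<Sum>k=1..n. A (2*k - 1)) - (\<Sum>k=1..n. A (2*k))"
      using npos by (simp add: G1_def G2_def scaleR_diff_right)
    also have "\<dots> = - (\<Sum>k=1..n. (-1::real)^(2*k-1) *\<^sub>R A (2*k - 1) + (-1::real)^(2*k) *\<^sub>R A (2*k))"
    proof -
      have "(-1::real)^(2*k-1) = -1" if "k \<ge> 1" for k
        using that by (simp add: odd_pos)
      then show ?thesis by (simp add: sum.distrib sum_negf sum_subtractf)
    qed
    also have "\<dots> = - V" unfolding V_def I_def by (subst sum_pairs) simp
    finally show ?thesis .
  qed
  have GV: "(real n)\<^sup>2 * (dist G1 G2)\<^sup>2 = (norm V)\<^sup>2"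
  proof -
    have "(real n)\<^sup>2 * (dist G1 G2)\<^sup>2 = (norm (real n *\<^sub>R (G1 - G2)))\<^sup>2"
      using npos by (simp add: dist_norm power_mult_distrib)
    then show ?thesis by (simp add: nG)
  qed
  have half: "(\<Sum>i\<in>I. \<Sum>j\<in>{j\<in>I. i<j}. g i j) = - (norm V)\<^sup>2"
  proof -
    have "(\<Sum>i\<in>I. \<Sum>j\<in>I. g i j) = 2 * (\<Sum>i\<in>I. \<Sum>j\<in>{j\<in>I. i<j}. g i j)"
      by (rule sq_sym[OF fI]) (auto simp: g_def add.commute norm_minus_commute)
    moreover have "(\<Sum>i\<in>I. \<Sum>j\<in>I. g i j) = -2 * (norm V)\<^sup>2"
      unfolding g_def V_def by (rule full_sq[OF fI E])
    ultimately show ?thesis by simp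
  qed
  define h where "h = (\<lambda>i. (if i < 2*n then g i (i+1) else 0) + (if i = 1 then g 1 (2*n) else 0))"
  have gT: "g i j = (-1::real) ^ (j - i) * (dist (A i) (A j))\<^sup>2" if "i < j" for i j
  proof -
    have "i + j = (j - i) + 2*i" using that by simp
    then have "(-1::real)^(i+j) = (-1)^(j-i) * ((-1)^2)^i" by (simp only: power_add power_mult)
    then have "(-1::real)^(i+j) = (-1)^(j-i)" by simp
    then show ?thesis by (simp add: g_def dist_norm)
  qed
  have row: "(\<Sum>j\<in>{j\<in>I. i<j}. g i j) = (\<Sum>j\<in>T i. g i j) + h i" if iI: "i \<in> I" for i
  proof -
    consider "i = 1" | "1 < i \<and> i < 2*n" | "i = 2*n" using iI unfolding I_def by fastforce
    then show ?thesis
    proof cases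
      case 1
      have "{j\<in>I. i<j} = T i \<union> {i+1} \<union> {2*n}" "T i = {3..2*n-1}"
        using 1 assms(1) by (auto simp: I_def T_def)
      moreover have "i+1 \<noteq> 2*n" using 1 assms(1) by simp
      ultimately show ?thesis using 1 assms(1)
        by (simp add: sum.union_disjoint h_def add.commute)
    next
      case 2
      have "{j\<in>I. i<j} = T i \<union> {i+1}" "T i = {i+2..2*n}"
        using 2 assms(1) by (auto simp: I_def T_def)
      then show ?thesis using 2 by (simp add: sum.union_disjoint h_def)
    next
      case 3
      have "{j\<in>I. i<j} = {}" "T i = {}"
        using 3 by (auto simp: I_def T_def)
      then show ?thesis using 3 assms(1) by (simp only: h_def) simp
    qed
  qed
  have Tsum: "(\<Sum>j\<in>T i. g i j) = (\<Sum>j\<in>T i. (-1::real) ^ (j - i) * (dist (A i) (A j))\<^sup>2)" for i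
    by (rule sum.cong) (auto simp: T_def gT)
  have hsum: "(\<Sum>i\<in>I. h i) = - (\<Sum>i=1..2*n. (dist (A i) (A (i+1)))\<^sup>2)"
  proof -
    have "(\<Sum>i\<in>I. h i) = (\<Sum>i\<in>I. if i < 2*n then g i (i+1) else 0) + (\<Sum>i\<in>I. if i = 1 then g 1 (2*n) else 0)"
      by (simp add: h_def sum.distrib)
    also have "(\<Sum>i\<in>I. if i = 1 then g 1 (2*n) else 0) = g 1 (2*n)"
      using assms(1) by (simp add: I_def)
    also have "(\<Sum>i\<in>I. if i < 2*n then g i (i+1) else 0) = (\<Sum>i\<in>I - {2*n}. g i (i+1))"
    proof -
      have "(\<Sum>i\<in>I. if i < 2*n then g i (i+1) else 0) = (\<Sum>i\<in>I - {2*n}. if i < 2*n then g i (i+1) else 0)"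
        using fI by (rule sum.mono_neutral_right) auto
      also have "\<dots> = (\<Sum>i\<in>I - {2*n}. g i (i+1))"
        by (rule sum.cong) (auto simp: I_def)
      finally show ?thesis .
    qed
    also have "(\<Sum>i\<in>I - {2*n}. g i (i+1)) = - (\<Sum>i\<in>I - {2*n}. (dist (A i) (A (i+1)))\<^sup>2)"
      by (simp add: gT sum_negf)
    also have "g 1 (2*n) = - (dist (A (2*n)) (A (2*n+1)))\<^sup>2"
      using assms by (simp add: gT dist_commute)
    also have "(\<Sum>i=1..2*n. (dist (A i) (A (i+1)))\<^sup>2) = (\<Sum>i\<in>I - {2*n}. (dist (A i) (A (i+1)))\<^sup>2) + (dist (A (2*n)) (A (2*n+1)))\<^sup>2"
    proof -
      have "2*n \<in> I" using assms(1) by (simp add: I_def)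
      from sum.remove[OF fI this, of "\<lambda>i. (dist (A i) (A (i+1)))\<^sup>2"] show ?thesis
        unfolding I_def by (simp add: add.commute)
    qed
    ultimately show ?thesis by simp
  qed
  have "(\<Sum>i\<in>I. \<Sum>j\<in>{j\<in>I. i<j}. g i j) = (\<Sum>i\<in>I. \<Sum>j\<in>T i. g i j) + (\<Sum>i\<in>I. h i)"
    by (simp add: row sum.distrib)
  moreover have "(\<Sum>i\<in>I. \<Sum>j\<in>T i. g i j) = (\<Sum>i=1..2*n. \<Sum>j\<in>{j. i < j \<and> j \<le> 2*n \<and> 1 < j - i \<and> j - i < 2*n - 1}.
             (-1::real) ^ (j - i) * (dist (A i) (A j))\<^sup>2)"
    unfolding Tsum by (simp add: I_def T_def)
  ultimately show ?thesis
    using half hsum GV by linarith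
qed

end
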